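(* Let $C$ be a finite-dimensional graded vector space with an $A_\infty$ coalgebra structure $\{\triangle_n\}$ and a nondegenerate symmetric bilinear form $\langle-,-\rangle$ of degree $-d$, and let $A=C^*=\mathrm{Hom}_k(C,k)$ with the dual $A_\infty$ algebra structure $\{\mu_n\}$ and the form transported along the isomorphism $C\to A$, $a\mapsto a^*=\langle-,a\rangle$. Then $C$ is a cyclic $A_\infty$ coalgebra if and only if $A$ is a cyclic $A_\infty$ algebra.
   Context: An $A_\infty$ coalgebra structure on a graded vector space $C$ is a sequence $\triangle_n:C\to C^{\otimes n}$ of degree $n-2$ with $\sum_{r+s+t=n}(-1)^{r+st}(\mathrm{id}^{\otimes r}\otimes\triangle_s\otimes\mathrm{id}^{\otimes t})\triangle_{r+1+t}=0$; an $A_\infty$ algebra structure on $A$ is $\mu_n:A^{\otimes n}\to A$ of degree $n-2$ with $\sum_{r+s+t=n}(-1)^{r+st}\mu_{r+1+t}(\mathrm{id}^{\otimes r}\otimes\mu_s\otimes\mathrm{id}^{\otimes t})=0$; the dual structure is $\mu_r(x_1,\dots,x_r)(a)=(x_1,\dots,x_r)(\triangle_r(a))$. A symmetric bilinear form of degree $-d$ is $\langle-,-\rangle:V\otimes V\to k[d]$ with $\langle v,w\rangle=(-1)^{|v||w|}\langle w,v\rangle$. $C$ is cyclic (of degree $-d$) if for all $a,b\in C$ and all $r$, writing $\triangle_r(a)=a^1\cdots a^r$, $\triangle_r(b)=b^1\cdots b^r$: $\langle a,b^1\rangle\, b^2\cdots b^r=(-1)^{r+|b^1|(|a|+r)}\langle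 b,a^r\rangle\, a^1\cdots a^{r-1}\in C^{\otimes(r-1)}$. $A$ is cyclic if $\langle\mu_n(a_1,\dots,a_n),a_{n+1}\rangle=(-1)^{n+|a_{n+1}|(|a_1|+\cdots+|a_n|)}\langle\mu_n(a_{n+1},a_1,\dots,a_{n-1}),a_n\rangle$ for all $n$ and all $a_i$. *)

theory Defs
  imports Main
begin

text \<open>The finite-dimensional graded vector space C over the field 'k
is k^I for a finite index type 'i of a homogeneous basis; basis vector e_x has degree deg x.
Elements of C are coefficient functions 'i => 'k; elements of C^{tensor n} are coefficient
functions on index lists of length n.  The dual A = Hom(C,k) is represented by the values
of a functional on the basis (dual basis coordinates); the dual basis element e_x^* has
degree - deg x.\<close>

definition koszul :: "int \<Rightarrow> 'k::ring_1" where
  "koszul x = (if even x then 1 else -1)"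

definition homog :: "('i \<Rightarrow> int) \<Rightarrow> int \<Rightarrow> ('i \<Rightarrow> 'k::zero) \<Rightarrow> bool" where
  "homog deg p v \<longleftrightarrow> (\<forall>x. v x \<noteq> 0 \<longrightarrow> deg x = p)"

definition bvec :: "'i \<Rightarrow> 'i \<Rightarrow> 'k::{zero,one}" where
  "bvec x = (\<lambda>y. if y = x then 1 else 0)"

definition bform :: "('i::finite \<Rightarrow> 'i \<Rightarrow> 'k::comm_ring_1) \<Rightarrow> ('i \<Rightarrow> 'k) \<Rightarrow> ('i \<Rightarrow> 'k) \<Rightarrow> 'k" where
  "bform B v w = (\<Sum>x\<in>UNIV. \<Sum>y\<in>UNIV. v x * w y * B x y)"

definition symmetric_form :: "('i::finite \<Rightarrow> int) \<Rightarrow> ('i \<Rightarrow> 'i \<Rightarrow> 'k::comm_ring_1) \<Rightarrow> bool" where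
  "symmetric_form deg B \<longleftrightarrow>
     (\<forall>p q v w. homog deg p v \<longrightarrow> homog deg q w \<longrightarrow>
        bform B v w = koszul (p * q) * bform B w v)"

text \<open>Degree -d: the form pairs degree p with degree d - p.\<close>
definition form_degree :: "('i::finite \<Rightarrow> int) \<Rightarrow> int \<Rightarrow> ('i \<Rightarrow> 'i \<Rightarrow> 'k::comm_ring_1) \<Rightarrow> bool" where
  "form_degree deg d B \<longleftrightarrow>
     (\<forall>p q v w. homog deg p v \<longrightarrow> homog deg q w \<longrightarrow> bform B v w \<noteq> 0 \<longrightarrow> p + q = d)"

definition nondegenerate :: "('i::finite \<Rightarrow> 'i \<Rightarrow> 'k::comm_ring_1) \<Rightarrow> bool" where
  "nondegenerate B \<longleftrightarrow> (\<forall>v. (\<forall>w. bform B v w = 0) \<longrightarrow> v = (\<lambda>_. 0))"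

text \<open>D n x J is the coefficient of e_{J!0} \<otimes> ... \<otimes> e_{J!(n-1)} in \<triangle>_n(e_x).\<close>
definition coprod :: "(nat \<Rightarrow> 'i \<Rightarrow> 'i list \<Rightarrow> 'k::comm_ring_1) \<Rightarrow> nat \<Rightarrow> ('i::finite \<Rightarrow> 'k) \<Rightarrow> 'i list \<Rightarrow> 'k" where
  "coprod D n v = (\<lambda>J. \<Sum>x\<in>UNIV. v x * D n x J)"

text \<open>A-infinity coalgebra: \<triangle>_n has degree n-2 (n \<ge> 1) and the Stasheff relations hold,
  where (id^r \<otimes> \<triangle>_s \<otimes> id^t) carries the Koszul sign (-1)^{(s-2)(|x_1|+...+|x_r|)}.\<close>
definition ainf_coalg :: "('i::finite \<Rightarrow> int) \<Rightarrow> (nat \<Rightarrow> 'i \<Rightarrow> 'i list \<Rightarrow> 'k::comm_ring_1) \<Rightarrow> bool" where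
  "ainf_coalg deg D \<longleftrightarrow>
    (\<forall>n x J. n \<ge> 1 \<longrightarrow> D n x J \<noteq> 0 \<longrightarrow>
        length J = n \<and> sum_list (map deg J) = deg x + int n - 2) \<and>
    (\<forall>n x M. n \<ge> 1 \<longrightarrow> length M = n \<longrightarrow>
       (\<Sum>(r,s,t)\<in>{(r,s,t). r + s + t = n \<and> s \<ge> 1}.
          koszul (int (r + s * t)) * koszul ((int s - 2) * sum_list (map deg (take r M))) *
          (\<Sum>y\<in>UNIV. D (r + 1 + t) x (take r M @ [y] @ drop (r + s) M) * D s y (take s (drop r M))))
        = 0)"

text \<open>Cyclicity of C, read literally in Sweedler notation (a homogeneous).\<close>
definition cyclic_coalg :: "('i::finite \<Rightarrow> int) \<Rightarrow> ('i \<Rightarrow> 'i \<Rightarrow> 'k::comm_ring_1) \<Rightarrow> (nat \<Rightarrow> 'i \<Rightarrow> 'i list \<Rightarrow> 'k) \<Rightarrow> bool" where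
  "cyclic_coalg deg B D \<longleftrightarrow>
    (\<forall>r p a b K. r \<ge> 1 \<longrightarrow> homog deg p a \<longrightarrow> length K = r - 1 \<longrightarrow>
       (\<Sum>m\<in>UNIV. koszul (int r + deg m * (p + int r)) * bform B a (bvec m) * coprod D r b (m # K))
       = (\<Sum>m\<in>UNIV. bform B b (bvec m) * coprod D r a (K @ [m])))"

definition evalT :: "('i \<Rightarrow> 'k::comm_ring_1) list \<Rightarrow> ('i list \<Rightarrow> 'k) \<Rightarrow> 'k" where
  "evalT xs t = (\<Sum>J\<in>{J. length J = length xs}. (\<Prod>a<length xs. (xs ! a) (J ! a)) * t J)"

definition mu :: "(nat \<Rightarrow> 'i \<Rightarrow> 'i list \<Rightarrow> 'k::comm_ring_1) \<Rightarrow> ('i \<Rightarrow> 'k) list \<Rightarrow> ('i \<Rightarrow> 'k)" where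
  "mu D xs = (\<lambda>i. evalT xs (D (length xs) i))"

definition homA :: "('i \<Rightarrow> int) \<Rightarrow> int \<Rightarrow> ('i \<Rightarrow> 'k::zero) \<Rightarrow> bool" where
  "homA deg p \<phi> \<longleftrightarrow> homog (\<lambda>x. - deg x) p \<phi>"

definition star :: "('i::finite \<Rightarrow> 'i \<Rightarrow> 'k::comm_ring_1) \<Rightarrow> ('i \<Rightarrow> 'k) \<Rightarrow> ('i \<Rightarrow> 'k)" where
  "star B a = (\<lambda>x. bform B (bvec x) a)"

definition formA :: "('i::finite \<Rightarrow> 'i \<Rightarrow> 'k::comm_ring_1) \<Rightarrow> ('i \<Rightarrow> 'k) \<Rightarrow> ('i \<Rightarrow> 'k) \<Rightarrow> 'k" where
  "formA B \<phi> \<psi> = bform B (inv (star B) \<phi>) (inv (star B) \<psi>)"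

text \<open>Cyclicity of A: a_1..a_{n-1} = xs (with degrees), a_n = z, a_{n+1} = y.\<close>
definition cyclic_alg :: "('i::finite \<Rightarrow> int) \<Rightarrow> ('i \<Rightarrow> 'i \<Rightarrow> 'k::comm_ring_1) \<Rightarrow> (nat \<Rightarrow> 'i \<Rightarrow> 'i list \<Rightarrow> 'k) \<Rightarrow> bool" where
  "cyclic_alg deg B D \<longleftrightarrow>
    (\<forall>n (xs :: (int \<times> ('i \<Rightarrow> 'k)) list) pz z py y.
       n \<ge> 1 \<longrightarrow> length xs = n - 1 \<longrightarrow> (\<forall>(p, \<phi>)\<in>set xs. homA deg p \<phi>) \<longrightarrow>
       homA deg pz z \<longrightarrow> homA deg py y \<longrightarrow>
       formA B (mu D (map snd xs @ [z])) y
       = koszul (int n + py * (sum_list (map fst xs) + pz)) * formA B (mu D (y # map snd xs)) z)"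

end

theory Submission
  imports Defs "HOL-Analysis.Cartesian_Space"
begin


lemma koszul_add: "(koszul (a + b) :: 'k::ring_1) = koszul a * koszul b"
  by (auto simp: koszul_def)

lemma koszul_sq: "(koszul a :: 'k::ring_1) * koszul a = 1"
  by (auto simp: koszul_def)

lemma koszul_cong: "even a = even b \<Longrightarrow> (koszul a :: 'k::ring_1) = koszul b"
  by (auto simp: koszul_def)

lemma ifmul1[simp]: "(if P then 1 else 0) * (t::'k::semiring_1) = (if P then t else 0)" by simp
lemma ifmul2[simp]: "(t::'k::semiring_1) * (if P then 1 else 0) = (if P then t else 0)" by simp
lemma ifmul3[simp]: "(if P then a else 0) * (t::'k::semiring_1) = (if P then a * t else 0)" by simp

lemma sum_ifP[simp]: "(\<Sum>y\<in>A. if P then f y else 0) = (if P then sum f A else (0::'k::comm_monoid_add))" by simp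

lemma bform_bvec: "bform B (bvec x) (bvec y) = B x y"
  by (simp add: bform_def bvec_def)

lemma homog_bvec: "homog deg (deg x) (bvec x :: 'i \<Rightarrow> 'k::zero_neq_one)"
  by (simp add: homog_def bvec_def)

lemma F1:
  assumes "form_degree deg d B" "B x y \<noteq> 0"
  shows "deg x + deg y = d"
  using assms unfolding form_degree_def
  by (metis bform_bvec homog_bvec)

lemma F2:
  assumes "symmetric_form deg B"
  shows "B x y = koszul (deg x * deg y) * B y x"
  using assms unfolding symmetric_form_def
  by (metis bform_bvec homog_bvec)

lemma Bswap:
  assumes "form_degree deg d B" "symmetric_form deg (B :: 'i::finite \<Rightarrow> 'i \<Rightarrow> 'k::comm_ring_1)"
  shows "B x y = koszul ((d - deg y) * deg y) * B y x"
proof (cases "B y x = 0")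
  case True
  then show ?thesis using F2[OF assms(2), of x y] by simp
next
  case False
  then have "deg x = d - deg y" using F1[OF assms(1) False] by simp
  then show ?thesis using F2[OF assms(2), of x y] by simp
qed

lemma star_eq: "star B a m = (\<Sum>y\<in>UNIV. a y * B m y)"
  by (simp add: star_def bform_def bvec_def)

lemma bform_eq2: "bform B a (bvec m) = (\<Sum>x\<in>UNIV. a x * B x m)"
  by (simp add: bform_def bvec_def)



lemma koszul_nz: "(koszul a :: 'k::ring_1) \<noteq> 0"
  by (simp add: koszul_def)

lemma star_zero:
  fixes B :: "'i::finite \<Rightarrow> 'i \<Rightarrow> 'k::field"
  assumes fd: "form_degree deg d B" and sf: "symmetric_form deg B" and nd: "nondegenerate B"
    and z: "star B v = (\<lambda>_. 0)"
  shows "v = (\<lambda>_. 0)"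
proof -
  define w where "w y = v y * koszul ((d - deg y) * deg y)" for y
  have col: "(\<Sum>x\<in>UNIV. w x * B x y) = 0" for y
  proof -
    have "(\<Sum>x\<in>UNIV. w x * B x y) = (\<Sum>x\<in>UNIV. v x * B y x)"
      by (rule sum.cong[OF refl]) (simp add: w_def Bswap[OF fd sf, of y] mult_ac)
    also have "\<dots> = star B v y" by (simp add: star_eq)
    finally show ?thesis using z by (metis)
  qed
  have "\<forall>u. bform B w u = 0"
  proof
    fix u
    have "bform B w u = (\<Sum>y\<in>UNIV. u y * (\<Sum>x\<in>UNIV. w x * B x y))"
      unfolding bform_def by (subst sum.swap) (simp add: sum_distrib_left mult_ac)
    then show "bform B w u = 0" using col by simp
  qed
  then have "w = (\<lambda>_. 0)" using nd by (simp add: nondegenerate_def)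
  then have "w y = 0" for y by metis
  then have "v y = 0" for y
    by (metis w_def koszul_nz mult_eq_0_iff)
  then show ?thesis by auto
qed

lemma star_linear_add: "star B (\<lambda>i. a i + b i) = (\<lambda>m. star B a m + star B b m)"
  by (rule ext) (simp add: star_eq algebra_simps sum.distrib)
lemma star_linear_scale: "star B (\<lambda>i. c * a i) = (\<lambda>m. c * star B a m)"
  by (rule ext) (simp add: star_eq algebra_simps sum_distrib_left)
lemma star_linear_diff: "star B (\<lambda>i. a i - b i) = (\<lambda>m. star B a m - star B b m)"
  by (rule ext) (simp add: star_eq algebra_simps sum_subtractf)

lemma star_inj:
  fixes B :: "'i::finite \<Rightarrow> 'i \<Rightarrow> 'k::field"
  assumes fd: "form_degree deg d B" and sf: "symmetric_form deg B" and nd: "nondegenerate B"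
  shows "inj (star B)"
proof (rule injI)
  fix a b assume "star B a = star B b"
  then have "star B (\<lambda>i. a i - b i) = (\<lambda>_. 0)" by (simp add: star_linear_diff)
  then have "(\<lambda>i. a i - b i) = (\<lambda>_. 0)" by (rule star_zero[OF fd sf nd])
  then show "a = b" by (metis eq_iff_diff_eq_0 ext)
qed

lemma star_surj:
  fixes B :: "'i::finite \<Rightarrow> 'i \<Rightarrow> 'k::field"
  assumes fd: "form_degree deg d B" and sf: "symmetric_form deg B" and nd: "nondegenerate B"
  shows "surj (star B)"
proof -
  define g :: "'k^'i \<Rightarrow> 'k^'i" where "g v = vec_lambda (star B (vec_nth v))" for v
  have lin: "Vector_Spaces.linear (*s) (*s) g"
    unfolding Vector_Spaces.linear_iff
  proof (intro conjI allI)
    show "vector_space ((*s) :: 'k \<Rightarrow> 'k^'i \<Rightarrow> 'k^'i)" by unfold_locales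
    show "vector_space ((*s) :: 'k \<Rightarrow> 'k^'i \<Rightarrow> 'k^'i)" by unfold_locales
    fix x y :: "'k^'i" and c :: 'k
    have e1: "vec_nth (x + y) = (\<lambda>i. x$i + y$i)" by auto
    have e2: "vec_nth (c *s x) = (\<lambda>i. c * x$i)" by auto
    show "g (x + y) = g x + g y"
      unfolding g_def e1 by (simp add: vec_eq_iff star_linear_add[unfolded fun_eq_iff, rule_format, symmetric])
    show "g (c *s x) = c *s g x"
      unfolding g_def e2 by (simp add: vec_eq_iff star_linear_scale[unfolded fun_eq_iff, rule_format, symmetric])
  qed
  have "inj g"
  proof (rule injI)
    fix x y assume "g x = g y"
    then have "star B (vec_nth x) = star B (vec_nth y)" unfolding g_def
      by (metis vec_lambda_inverse UNIV_I)
    then have "vec_nth x = vec_nth y" using star_inj[OF fd sf nd] by (simp add: inj_eq)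
    then show "x = y" by (simp add: vec_nth_inject)
  qed
  then have sg: "surj g" using vec.linear_inj_imp_surj[OF lin] by simp
  show ?thesis
  proof (rule surjI)
    fix F :: "'i \<Rightarrow> 'k"
    obtain v where "g v = vec_lambda F" using sg by (metis surjD)
    then have "star B (vec_nth v) = F" unfolding g_def
      by (metis vec_lambda_inverse UNIV_I)
    then show "star B (vec_nth (SOME v. star B (vec_nth v) = F)) = F"
      by (metis (mono_tags) someI_ex)
  qed
qed



lemma formA_star:
  fixes B :: "'i::finite \<Rightarrow> 'i \<Rightarrow> 'k::field"
  assumes fd: "form_degree deg d B" and sf: "symmetric_form deg B" and nd: "nondegenerate B"
  shows "formA B F (star B b) = (\<Sum>y\<in>UNIV. b y * koszul ((d - deg y) * deg y) * F y)"
proof -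
  obtain c where c: "star B c = F" using star_surj[OF fd sf nd] by (metis surjD)
  have ic: "inv (star B) F = c" using c star_inj[OF fd sf nd] by (metis inv_f_f)
  have ib: "inv (star B) (star B b) = b" using star_inj[OF fd sf nd] by (metis inv_f_f)
  have "formA B F (star B b) = (\<Sum>x\<in>UNIV. \<Sum>y\<in>UNIV. c x * b y * B x y)"
    by (simp add: formA_def ic ib bform_def)
  also have "\<dots> = (\<Sum>x\<in>UNIV. \<Sum>y\<in>UNIV. b y * koszul ((d - deg y) * deg y) * (c x * B y x))"
  proof (intro sum.cong refl)
    fix x y
    show "c x * b y * B x y = b y * koszul ((d - deg y) * deg y) * (c x * B y x)"
      using Bswap[OF fd sf, of x y] by (simp add: mult_ac)
  qed
  also have "\<dots> = (\<Sum>y\<in>UNIV. b y * koszul ((d - deg y) * deg y) * F y)"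
    by (subst sum.swap) (simp add: sum_distrib_left c[symmetric] star_eq mult_ac)
  finally show ?thesis .
qed

lemma homA_star:
  fixes B :: "'i::finite \<Rightarrow> 'i \<Rightarrow> 'k::field"
  assumes fd: "form_degree deg d B" and sf: "symmetric_form deg B" and nd: "nondegenerate B"
    and h: "homA deg p (star B a)"
  shows "homog deg (p + d) a"
proof -
  define a1 where "a1 y = (if deg y = p + d then a y else 0)" for y
  have "star B a1 = star B a"
  proof
    fix x
    show "star B a1 x = star B a x"
    proof (cases "- deg x = p")
      case True
      show ?thesis unfolding star_eq
      proof (rule sum.cong[OF refl])
        fix y
        show "a1 y * B x y = a y * B x y"
          using F1[OF fd, of x y] True by (cases "B x y = 0") (auto simp: a1_def)
      qed
    next
      case False
      then have "star B a x = 0" using h by (auto simp: homA_def homog_def)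
      moreover have "star B a1 x = 0" unfolding star_eq
      proof (rule sum.neutral, rule ballI)
        fix y
        show "a1 y * B x y = 0"
          using F1[OF fd, of x y] False by (cases "B x y = 0") (auto simp: a1_def)
      qed
      ultimately show ?thesis by simp
    qed
  qed
  then have "a1 = a" using star_inj[OF fd sf nd] by (simp add: inj_eq)
  then show ?thesis unfolding homog_def by (metis a1_def)
qed

definition PI :: "('i \<Rightarrow> 'k::comm_ring_1) list \<Rightarrow> 'i list \<Rightarrow> 'k" where
  "PI xs K = (\<Prod>a<length xs. (xs!a) (K!a))"

lemma lists_snoc_eq: "{J :: 'i list. length J = Suc l} = (\<lambda>(K,m). K @ [m]) ` ({K. length K = l} \<times> UNIV)"
proof (rule set_eqI, rule iffI)
  fix J :: "'i list" assume "J \<in> {J. length J = Suc l}"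
  then have "J = butlast J @ [last J]" "length (butlast J) = l"
    by (auto intro!: append_butlast_last_id[symmetric])
  then show "J \<in> (\<lambda>(K,m). K @ [m]) ` ({K. length K = l} \<times> UNIV)"
    by (metis (mono_tags, lifting) UNIV_I case_prod_conv image_eqI mem_Collect_eq mem_Sigma_iff)
qed auto

lemma lists_cons_eq: "{J :: 'i list. length J = Suc l} = (\<lambda>(K,m). m # K) ` ({K. length K = l} \<times> UNIV)"
proof (rule set_eqI, rule iffI)
  fix J :: "'i list" assume "J \<in> {J. length J = Suc l}"
  then obtain m K where "J = m # K" "length K = l" by (cases J) auto
  then show "J \<in> (\<lambda>(K,m). m # K) ` ({K. length K = l} \<times> UNIV)" by force
qed auto

lemma evalT_snoc:
  fixes xs :: "('i \<Rightarrow> 'k::comm_ring_1) list"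
  shows
  "evalT (xs @ [z]) t = (\<Sum>K\<in>{K. length K = length xs}. \<Sum>m\<in>UNIV. PI xs K * z m * t (K @ [m]))"
proof -
  have inj: "inj_on (\<lambda>(K,m). K @ [m]) ({K. length K = length xs} \<times> (UNIV :: 'i set))"
    by (auto simp: inj_on_def)
  have pr: "(\<Prod>a<Suc (length xs). ((xs @ [z]) ! a) ((K @ [m]) ! a)) = PI xs K * z m"
    if "length K = length xs" for K m
  proof -
    have "(\<Prod>a<length xs. ((xs @ [z]) ! a) ((K @ [m]) ! a)) = PI xs K"
      unfolding PI_def by (rule prod.cong) (auto simp: nth_append that)
    then show ?thesis using that by (simp add: nth_append)
  qed
  have "evalT (xs @ [z]) t = (\<Sum>J\<in>(\<lambda>(K,m). K @ [m]) ` ({K. length K = length xs} \<times> UNIV).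
          (\<Prod>a<Suc (length xs). ((xs @ [z]) ! a) (J ! a)) * t J)"
    unfolding evalT_def by (simp add: lists_snoc_eq[symmetric])
  also have "\<dots> = (\<Sum>(K,m)\<in>{K. length K = length xs} \<times> UNIV. PI xs K * z m * t (K @ [m]))"
    by (subst sum.reindex[OF inj]) (auto intro!: sum.cong simp: pr simp del: prod.lessThan_Suc)
  also have "\<dots> = (\<Sum>K\<in>{K. length K = length xs}. \<Sum>m\<in>UNIV. PI xs K * z m * t (K @ [m]))"
    by (subst sum.cartesian_product) simp
  finally show ?thesis .
qed

lemma evalT_cons:
  fixes xs :: "('i \<Rightarrow> 'k::comm_ring_1) list"
  shows
  "evalT (z # xs) t = (\<Sum>K\<in>{K. length K = length xs}. \<Sum>m\<in>UNIV. z m * PI xs K * t (m # K))"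
proof -
  have inj: "inj_on (\<lambda>(K,m). m # K) ({K. length K = length xs} \<times> (UNIV :: 'i set))"
    by (auto simp: inj_on_def)
  have pr: "(\<Prod>a<Suc (length xs). ((z # xs) ! a) ((m # K) ! a)) = z m * PI xs K"
    if "length K = length xs" for K m
    unfolding PI_def by (simp only: prod.lessThan_Suc_shift) simp
  have "evalT (z # xs) t = (\<Sum>J\<in>(\<lambda>(K,m). m # K) ` ({K. length K = length xs} \<times> UNIV).
          (\<Prod>a<Suc (length xs). ((z # xs) ! a) (J ! a)) * t J)"
    unfolding evalT_def by (simp add: lists_cons_eq[symmetric])
  also have "\<dots> = (\<Sum>(K,m)\<in>{K. length K = length xs} \<times> UNIV. z m * PI xs K * t (m # K))"
    by (subst sum.reindex[OF inj]) (auto intro!: sum.cong simp: pr simp del: prod.lessThan_Suc)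
  also have "\<dots> = (\<Sum>K\<in>{K. length K = length xs}. \<Sum>m\<in>UNIV. z m * PI xs K * t (m # K))"
    by (subst sum.cartesian_product) simp
  finally show ?thesis .
qed



definition Xc :: "('i \<Rightarrow> 'i \<Rightarrow> 'k::comm_ring_1) \<Rightarrow> (nat \<Rightarrow> 'i \<Rightarrow> 'i list \<Rightarrow> 'k) \<Rightarrow> 'i \<Rightarrow> 'i \<Rightarrow> 'i list \<Rightarrow> 'k" where
  "Xc B D u v K = (\<Sum>m\<in>UNIV. B v m * D (Suc (length K)) u (K @ [m]))"
definition Yc :: "('i \<Rightarrow> 'i \<Rightarrow> 'k::comm_ring_1) \<Rightarrow> (nat \<Rightarrow> 'i \<Rightarrow> 'i list \<Rightarrow> 'k) \<Rightarrow> 'i \<Rightarrow> 'i \<Rightarrow> 'i list \<Rightarrow> 'k" where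
  "Yc B D u v K = (\<Sum>m\<in>UNIV. B u m * D (Suc (length K)) v (m # K))"

lemma star_swap:
  fixes B :: "'i::finite \<Rightarrow> 'i \<Rightarrow> 'k::field"
  assumes fd: "form_degree deg d B" and sf: "symmetric_form deg B"
  shows "star B a m = (\<Sum>v\<in>UNIV. a v * koszul ((d - deg v) * deg v) * B v m)"
  unfolding star_eq by (rule sum.cong[OF refl]) (simp add: Bswap[OF fd sf, of m] mult_ac)

lemma E1:
  fixes B :: "'i::finite \<Rightarrow> 'i \<Rightarrow> 'k::field"
  assumes fd: "form_degree deg d B" and sf: "symmetric_form deg B"
  shows "mu D (xs @ [star B a]) u =
    (\<Sum>v\<in>UNIV. \<Sum>K\<in>{K. length K = length xs}. a v * koszul ((d - deg v) * deg v) * PI xs K * Xc B D u v K)"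
proof -
  have "mu D (xs @ [star B a]) u =
     (\<Sum>K\<in>{K. length K = length xs}. \<Sum>m\<in>UNIV. PI xs K * star B a m * D (Suc (length xs)) u (K @ [m]))"
    unfolding mu_def by (simp add: evalT_snoc)
  also have "\<dots> = (\<Sum>K\<in>{K. length K = length xs}. \<Sum>m\<in>UNIV. \<Sum>v\<in>UNIV.
        a v * koszul ((d - deg v) * deg v) * PI xs K * (B v m * D (Suc (length xs)) u (K @ [m])))"
    by (simp add: star_swap[OF fd sf] sum_distrib_left sum_distrib_right mult_ac)
  also have "\<dots> = (\<Sum>K\<in>{K. length K = length xs}. \<Sum>v\<in>UNIV.
        a v * koszul ((d - deg v) * deg v) * PI xs K * Xc B D u v K)"
    by (rule sum.cong[OF refl], subst sum.swap, simp add: Xc_def sum_distrib_left mult_ac)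
  also have "\<dots> = (\<Sum>v\<in>UNIV. \<Sum>K\<in>{K. length K = length xs}. a v * koszul ((d - deg v) * deg v) * PI xs K * Xc B D u v K)"
    by (rule sum.swap)
  finally show ?thesis .
qed

lemma E2:
  fixes B :: "'i::finite \<Rightarrow> 'i \<Rightarrow> 'k::field"
  assumes fd: "form_degree deg d B" and sf: "symmetric_form deg B"
  shows "mu D (star B b # xs) v =
    (\<Sum>u\<in>UNIV. \<Sum>K\<in>{K. length K = length xs}. b u * koszul ((d - deg u) * deg u) * PI xs K * Yc B D u v K)"
proof -
  have "mu D (star B b # xs) v =
     (\<Sum>K\<in>{K. length K = length xs}. \<Sum>m\<in>UNIV. star B b m * PI xs K * D (Suc (length xs)) v (m # K))"
    unfolding mu_def by (simp add: evalT_cons)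
  also have "\<dots> = (\<Sum>K\<in>{K. length K = length xs}. \<Sum>m\<in>UNIV. \<Sum>u\<in>UNIV.
        b u * koszul ((d - deg u) * deg u) * PI xs K * (B u m * D (Suc (length xs)) v (m # K)))"
    by (simp add: star_swap[OF fd sf] sum_distrib_left sum_distrib_right mult_ac)
  also have "\<dots> = (\<Sum>K\<in>{K. length K = length xs}. \<Sum>u\<in>UNIV.
        b u * koszul ((d - deg u) * deg u) * PI xs K * Yc B D u v K)"
    by (rule sum.cong[OF refl], subst sum.swap, simp add: Yc_def sum_distrib_left mult_ac)
  also have "\<dots> = (\<Sum>u\<in>UNIV. \<Sum>K\<in>{K. length K = length xs}. b u * koszul ((d - deg u) * deg u) * PI xs K * Yc B D u v K)"
    by (rule sum.swap)
  finally show ?thesis .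
qed



lemma kB:
  fixes B :: "'i::finite \<Rightarrow> 'i \<Rightarrow> 'k::field"
  assumes fd: "form_degree deg d B"
  shows "koszul (r + deg m * (deg x + r)) * B x m = koszul (r + (d - deg x) * (deg x + r)) * B x m"
proof (cases "B x m = 0")
  case False
  then have "deg m = d - deg x" using F1[OF fd False] by simp
  then show ?thesis by simp
qed simp

lemma kB2:
  fixes B :: "'i::finite \<Rightarrow> 'i \<Rightarrow> 'k::field"
  assumes fd: "form_degree deg d B"
  shows "c * (koszul (r + deg m * (deg x + r)) * B x m * t) = c * (koszul (r + (d - deg x) * (deg x + r)) * (B x m * t))"
  using kB[OF fd, of r m x] by (metis mult.assoc)

lemma coalg_lhs:
  fixes B :: "'i::finite \<Rightarrow> 'i \<Rightarrow> 'k::field"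
  assumes fd: "form_degree deg d B" and ha: "homog deg p a" and r: "r = Suc (length K)"
  shows "(\<Sum>m\<in>UNIV. koszul (int r + deg m * (p + int r)) * bform B a (bvec m) * coprod D r b (m # K))
     = (\<Sum>x\<in>UNIV. \<Sum>y\<in>UNIV. a x * b y * (koszul (int r + (d - deg x) * (deg x + int r)) * Yc B D x y K))"
proof -
  have "(\<Sum>m\<in>UNIV. koszul (int r + deg m * (p + int r)) * bform B a (bvec m) * coprod D r b (m # K))
     = (\<Sum>m\<in>UNIV. \<Sum>x\<in>UNIV. \<Sum>y\<in>UNIV. a x * b y * (koszul (int r + deg m * (p + int r)) * B x m * D r y (m # K)))"
    by (simp add: bform_eq2 coprod_def sum_distrib_left sum_distrib_right mult_ac)
  also have "\<dots> = (\<Sum>x\<in>UNIV. \<Sum>y\<in>UNIV. \<Sum>m\<in>UNIV. a x * b y * (koszul (int r + deg m * (p + int r)) * B x m * D r y (m # K)))"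
    by (subst sum.swap, rule sum.cong[OF refl], subst sum.swap, rule refl)
  also have "\<dots> = (\<Sum>x\<in>UNIV. \<Sum>y\<in>UNIV. a x * b y * (koszul (int r + (d - deg x) * (deg x + int r)) * Yc B D x y K))"
  proof (intro sum.cong refl)
    fix x y
    show "(\<Sum>m\<in>UNIV. a x * b y * (koszul (int r + deg m * (p + int r)) * B x m * D r y (m # K))) =
      a x * b y * (koszul (int r + (d - deg x) * (deg x + int r)) * Yc B D x y K)"
    proof (cases "a x = 0")
      case False
      then have "deg x = p" using ha by (auto simp: homog_def)
      then show ?thesis
        unfolding Yc_def r[symmetric] sum_distrib_left
        by (simp only: kB2[OF fd] \<open>deg x = p\<close>[symmetric])
    qed simp
  qed
  finally show ?thesis .
qed

lemma coalg_rhs: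
  fixes B :: "'i::finite \<Rightarrow> 'i \<Rightarrow> 'k::field"
  assumes r: "r = Suc (length K)"
  shows "(\<Sum>m\<in>UNIV. bform B b (bvec m) * coprod D r a (K @ [m]))
     = (\<Sum>x\<in>UNIV. \<Sum>y\<in>UNIV. a x * b y * Xc B D x y K)"
proof -
  have "(\<Sum>m\<in>UNIV. bform B b (bvec m) * coprod D r a (K @ [m]))
     = (\<Sum>m\<in>UNIV. \<Sum>x\<in>UNIV. \<Sum>y\<in>UNIV. a x * b y * (B y m * D r x (K @ [m])))"
    by (simp add: bform_eq2 coprod_def sum_distrib_left sum_distrib_right mult_ac)
  also have "\<dots> = (\<Sum>x\<in>UNIV. \<Sum>y\<in>UNIV. \<Sum>m\<in>UNIV. a x * b y * (B y m * D r x (K @ [m])))"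
    by (subst sum.swap, rule sum.cong[OF refl], subst sum.swap, rule refl)
  also have "\<dots> = (\<Sum>x\<in>UNIV. \<Sum>y\<in>UNIV. a x * b y * Xc B D x y K)"
    by (simp add: Xc_def r sum_distrib_left)
  finally show ?thesis .
qed

lemma sign_lemma:
  fixes B :: "'i::finite \<Rightarrow> 'i \<Rightarrow> 'k::field"
  assumes fd: "form_degree deg d B" and ac: "ainf_coalg deg D" and Y: "Yc B D u v K \<noteq> 0"
  shows "(koszul (int (Suc (length K)) + (d - deg u) * (deg u + int (Suc (length K)))) :: 'k)
       = koszul (int (Suc (length K)) + (deg u - d) * (deg v - d - sum_list (map deg K)))"
proof -
  obtain m where m1: "B u m \<noteq> 0" and m2: "D (Suc (length K)) v (m # K) \<noteq> 0"
    using Y unfolding Yc_def by (metis (no_types, lifting) mult_eq_0_iff sum.neutral)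
  have e1: "deg u + deg m = d" using F1[OF fd m1] .
  have e2: "deg m + sum_list (map deg K) = deg v + int (Suc (length K)) - 2"
    using m2 ac unfolding ainf_coalg_def by fastforce
  define n where "n = int (Suc (length K))"
  have e3: "sum_list (map deg K) = deg v + n - 2 - d + deg u" using e1 e2 unfolding n_def by simp
  have "(deg u - d) * (deg v - d - sum_list (map deg K)) = (d - deg u) * (deg u + n) - 2 * (d - deg u)"
    unfolding e3 by (simp add: algebra_simps)
  moreover have "even (a + x) = even (a + (x - 2 * c))" for a x c :: int by presburger
  ultimately show ?thesis unfolding n_def[symmetric] by (intro koszul_cong) simp
qed



lemma PI_Nil: "PI [] K = 1" by (simp add: PI_def)
lemma PI_Cons: "PI (f # fs) (k # K) = f k * PI fs K"
  unfolding PI_def by (simp only: length_Cons prod.lessThan_Suc_shift) simp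

lemma PI_deg:
  assumes "\<forall>(p,\<phi>)\<in>set xs. homA deg p \<phi>" "length K = length xs" "PI (map snd xs) K \<noteq> (0::'k::comm_ring_1)"
  shows "sum_list (map deg K) = - sum_list (map fst xs)"
  using assms
proof (induction xs arbitrary: K)
  case Nil then show ?case by simp
next
  case (Cons x xs)
  then obtain k K' where K: "K = k # K'" by (cases K) auto
  obtain p \<phi> where x: "x = (p, \<phi>)" by (cases x)
  from Cons.prems K x have nz: "\<phi> k \<noteq> 0" "PI (map snd xs) K' \<noteq> 0" by (auto simp: PI_Cons)
  from Cons.prems x have "homA deg p \<phi>" by auto
  then have "- deg k = p" using nz(1) by (auto simp: homA_def homog_def)
  moreover have "sum_list (map deg K') = - sum_list (map fst xs)"
    using Cons.IH[of K'] Cons.prems K nz(2) by auto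
  ultimately show ?case using K x by simp
qed

lemma PI_bvec:
  "length K' = length K \<Longrightarrow> PI (map bvec K) K' = (if K' = K then 1 else (0::'k::comm_ring_1))"
proof (induction K arbitrary: K')
  case Nil then show ?case by (simp add: PI_Nil)
next
  case (Cons k K)
  then obtain k' K'' where "K' = k' # K''" by (cases K') auto
  with Cons show ?case by (auto simp: PI_Cons bvec_def)
qed

lemma sum_list_neg: "sum_list (map (\<lambda>k. - (f k :: int)) K) = - sum_list (map f K)"
  by (induction K) auto



definition CB :: "('i::finite \<Rightarrow> int) \<Rightarrow> int \<Rightarrow> ('i \<Rightarrow> 'i \<Rightarrow> 'k::comm_ring_1) \<Rightarrow> (nat \<Rightarrow> 'i \<Rightarrow> 'i list \<Rightarrow> 'k) \<Rightarrow> bool" where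
  "CB deg d B D \<longleftrightarrow> (\<forall>K u v. Xc B D u v K =
     koszul (int (Suc (length K)) + (d - deg u) * (deg u + int (Suc (length K)))) * Yc B D u v K)"

lemma coalg_CB:
  fixes B :: "'i::finite \<Rightarrow> 'i \<Rightarrow> 'k::field"
  assumes fd: "form_degree deg d B"
  shows "cyclic_coalg deg B D \<longleftrightarrow> CB deg d B D"
proof
  assume cc: "cyclic_coalg deg B D"
  show "CB deg d B D" unfolding CB_def
  proof (intro allI)
    fix K :: "'i list" and u v
    define r where "r = Suc (length K)"
    have "(\<Sum>m\<in>UNIV. koszul (int r + deg m * (deg u + int r)) * bform B (bvec u) (bvec m) * coprod D r (bvec v) (m # K))
       = (\<Sum>m\<in>UNIV. bform B (bvec v) (bvec m) * coprod D r (bvec u) (K @ [m]))"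
    proof -
      have "1 \<le> r" "length K = r - 1" unfolding r_def by simp_all
      then show ?thesis
        using cc[unfolded cyclic_coalg_def, rule_format, of r "deg u" "bvec u" K "bvec v"] homog_bvec[of deg u]
        by blast
    qed
    then show "Xc B D u v K = koszul (int (Suc (length K)) + (d - deg u) * (deg u + int (Suc (length K)))) * Yc B D u v K"
      unfolding coalg_lhs[OF fd homog_bvec r_def] coalg_rhs[OF r_def]
      by (simp add: bvec_def r_def)
  qed
next
  assume cb: "CB deg d B D"
  show "cyclic_coalg deg B D" unfolding cyclic_coalg_def
  proof (intro allI impI)
    fix r :: nat and p :: int and a b :: "'i \<Rightarrow> 'k" and K :: "'i list"
    assume "1 \<le> r" and ha: "homog deg p a" and "length K = r - 1"
    then have r: "r = Suc (length K)" by simp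
    show "(\<Sum>m\<in>UNIV. koszul (int r + deg m * (p + int r)) * bform B a (bvec m) * coprod D r b (m # K))
       = (\<Sum>m\<in>UNIV. bform B b (bvec m) * coprod D r a (K @ [m]))"
      unfolding coalg_lhs[OF fd ha r] coalg_rhs[OF r]
      using cb unfolding CB_def r by simp
  qed
qed



lemma FL:
  fixes B :: "'i::finite \<Rightarrow> 'i \<Rightarrow> 'k::field"
  assumes fd: "form_degree deg d B" and sf: "symmetric_form deg B" and nd: "nondegenerate B"
  shows "formA B (mu D (xs @ [star B a])) (star B b) =
    (\<Sum>u\<in>UNIV. \<Sum>v\<in>UNIV. \<Sum>K\<in>{K. length K = length xs}.
       (b u * koszul ((d - deg u) * deg u) * (a v * koszul ((d - deg v) * deg v) * PI xs K)) * Xc B D u v K)"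
  unfolding formA_star[OF fd sf nd] E1[OF fd sf]
  by (simp add: sum_distrib_left mult_ac)

lemma FR:
  fixes B :: "'i::finite \<Rightarrow> 'i \<Rightarrow> 'k::field"
  assumes fd: "form_degree deg d B" and sf: "symmetric_form deg B" and nd: "nondegenerate B"
  shows "formA B (mu D (star B b # xs)) (star B a) =
    (\<Sum>u\<in>UNIV. \<Sum>v\<in>UNIV. \<Sum>K\<in>{K. length K = length xs}.
       (b u * koszul ((d - deg u) * deg u) * (a v * koszul ((d - deg v) * deg v) * PI xs K)) * Yc B D u v K)"
  unfolding formA_star[OF fd sf nd] E2[OF fd sf]
  by (subst sum.swap) (simp add: sum_distrib_left mult_ac)



lemma homA_star_bvec:
  fixes B :: "'i::finite \<Rightarrow> 'i \<Rightarrow> 'k::field"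
  assumes fd: "form_degree deg d B"
  shows "homA deg (deg v - d) (star B (bvec v))"
  unfolding homA_def homog_def
proof (intro allI impI)
  fix x assume "star B (bvec v) x \<noteq> 0"
  then have "B x v \<noteq> 0" by (simp add: star_eq bvec_def)
  then show "- deg x = deg v - d" using F1[OF fd] by fastforce
qed

lemma finite_lists: "finite {K :: 'i::finite list. length K = n}"
  using finite_lists_length_eq[of "UNIV :: 'i set" n] by simp

lemma collapse:
  fixes K :: "'i::finite list" and u v :: 'i
  shows
  "(\<Sum>u'\<in>UNIV. \<Sum>v'\<in>UNIV. \<Sum>K'\<in>{K'. length K' = length K}.
     (bvec u u' * f u' * (bvec v v' * g v' * PI (map bvec K) K')) * h u' v' K')
   = f u * g v * (h u v K :: 'k::comm_ring_1)"
proof -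
  have eq: "(\<Sum>K'\<in>{K'. length K' = length K}. (bvec u u' * f u' * (bvec v v' * g v' * PI (map bvec K) K')) * h u' v' K')
      = bvec u u' * (bvec v v' * (f u' * g v' * h u' v' K))" for u' v'
  proof -
    have "(\<Sum>K'\<in>{K'. length K' = length K}. (bvec u u' * f u' * (bvec v v' * g v' * PI (map bvec K) K')) * h u' v' K')
       = (\<Sum>K'\<in>{K'. length K' = length K}. if K' = K then bvec u u' * f u' * (bvec v v' * g v') * h u' v' K else 0)"
      by (rule sum.cong[OF refl]) (auto simp: PI_bvec)
    also have "\<dots> = bvec u u' * f u' * (bvec v v' * g v') * h u' v' K"
      by (subst sum.delta) (simp_all add: finite_lists)
    finally show ?thesis by (simp add: mult_ac)
  qed
  have sb: "(\<Sum>x\<in>UNIV. bvec w x * F x) = (F w :: 'k)" for w :: 'i and F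
    by (simp add: bvec_def)
  show ?thesis unfolding eq sum_distrib_left[symmetric] by (simp add: sb)
qed

lemma alg_CB:
  fixes B :: "'i::finite \<Rightarrow> 'i \<Rightarrow> 'k::field"
  assumes fd: "form_degree deg d B" and sf: "symmetric_form deg B" and nd: "nondegenerate B"
    and ac: "ainf_coalg deg D"
  shows "cyclic_alg deg B D \<longleftrightarrow> CB deg d B D"
proof
  assume ca: "cyclic_alg deg B D"
  show "CB deg d B D" unfolding CB_def
  proof (intro allI)
    fix K :: "'i list" and u v
    define xs where "xs = map (\<lambda>k. (- deg k, bvec k :: 'i \<Rightarrow> 'k)) K"
    define n where "n = Suc (length K)"
    define su where "su = (koszul ((d - deg u) * deg u) :: 'k)"
    define sv where "sv = (koszul ((d - deg v) * deg v) :: 'k)"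
    define sg where "sg = (koszul (int n + (deg u - d) * (sum_list (map fst xs) + (deg v - d))) :: 'k)"
    have hx: "\<forall>(p, \<phi>)\<in>set xs. homA deg p \<phi>"
      by (auto simp: xs_def homA_def homog_def bvec_def)
    have ms: "map snd xs = map bvec K" by (simp add: xs_def)
    have mf: "sum_list (map fst xs) = - sum_list (map deg K)"
      by (simp add: xs_def o_def sum_list_neg)
    have "formA B (mu D (map snd xs @ [star B (bvec v)])) (star B (bvec u))
        = sg * formA B (mu D (star B (bvec u) # map snd xs)) (star B (bvec v))"
      using ca[unfolded cyclic_alg_def, rule_format, of n xs "deg v - d" "star B (bvec v)" "deg u - d" "star B (bvec u)"]
        hx homA_star_bvec[OF fd] unfolding sg_def n_def xs_def by simp
    then have "su * sv * Xc B D u v K = sg * (su * sv * Yc B D u v K)"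
      unfolding FL[OF fd sf nd] FR[OF fd sf nd] ms
      by (simp only: collapse length_map su_def sv_def)
    moreover have "su * sv \<noteq> 0" by (simp add: su_def sv_def koszul_nz)
    ultimately have XY: "Xc B D u v K = sg * Yc B D u v K"
      by (metis (no_types, lifting) mult.left_commute mult_left_cancel)
    show "Xc B D u v K = koszul (int (Suc (length K)) + (d - deg u) * (deg u + int (Suc (length K)))) * Yc B D u v K"
    proof (cases "Yc B D u v K = 0")
      case True then show ?thesis using XY by simp
    next
      case False
      have "sg = koszul (int (Suc (length K)) + (deg u - d) * (deg v - d - sum_list (map deg K)))"
        unfolding sg_def mf n_def by (simp add: algebra_simps)
      then show ?thesis using XY sign_lemma[OF fd ac False] by simp
    qed
  qed
next
  assume cb: "CB deg d B D"
  show "cyclic_alg deg B D" unfolding cyclic_alg_def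
  proof (intro allI impI)
    fix n :: nat and xs :: "(int \<times> ('i \<Rightarrow> 'k)) list" and pz :: int and z :: "'i \<Rightarrow> 'k" and py :: int and y :: "'i \<Rightarrow> 'k"
    assume n1: "1 \<le> n" and lx: "length xs = n - 1" and hx: "\<forall>(p, \<phi>)\<in>set xs. homA deg p \<phi>"
      and hz: "homA deg pz z" and hy: "homA deg py y"
    obtain a where za: "z = star B a" using star_surj[OF fd sf nd] by (metis surjD)
    obtain b where yb: "y = star B b" using star_surj[OF fd sf nd] by (metis surjD)
    have ha: "homog deg (pz + d) a" using homA_star[OF fd sf nd] hz za by blast
    have hb: "homog deg (py + d) b" using homA_star[OF fd sf nd] hy yb by blast
    define sg where "sg = (koszul (int n + py * (sum_list (map fst xs) + pz)) :: 'k)"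
    have "formA B (mu D (map snd xs @ [z])) y = sg * formA B (mu D (y # map snd xs)) z"
      unfolding za yb FL[OF fd sf nd] FR[OF fd sf nd] sum_distrib_left
    proof (intro sum.cong refl)
      fix u v :: 'i and K :: "'i list" assume K: "K \<in> {K. length K = length (map snd xs)}"
      let ?T = "b u * koszul ((d - deg u) * deg u) * (a v * koszul ((d - deg v) * deg v) * PI (map snd xs) K)"
      show "?T * Xc B D u v K = sg * (?T * Yc B D u v K)"
      proof (cases "?T = 0")
        case True then show ?thesis by (simp only: True mult_zero_left mult_zero_right)
      next
        case False
        then have nz: "b u \<noteq> 0" "a v \<noteq> 0" "PI (map snd xs) K \<noteq> 0" by auto
        have du: "deg u = py + d" using hb nz(1) by (auto simp: homog_def)
        have dv: "deg v = pz + d" using ha nz(2) by (auto simp: homog_def)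
        have dK: "sum_list (map deg K) = - sum_list (map fst xs)"
          using PI_deg[OF hx _ nz(3)] K by simp
        have nK: "n = Suc (length K)" using K lx n1 by simp
        have X: "Xc B D u v K = sg * Yc B D u v K"
        proof (cases "Yc B D u v K = 0")
          case True then show ?thesis using cb unfolding CB_def by simp
        next
          case False
          have "sg = koszul (int (Suc (length K)) + (deg u - d) * (deg v - d - sum_list (map deg K)))"
            unfolding sg_def du dv dK nK by (simp add: algebra_simps)
          then show ?thesis using cb sign_lemma[OF fd ac False] unfolding CB_def by metis
        qed
        then show ?thesis by (simp add: mult_ac)
      qed
    qed
    then show "formA B (mu D (map snd xs @ [z])) y =
       koszul (int n + py * (sum_list (map fst xs) + pz)) * formA B (mu D (y # map snd xs)) z"
      unfolding sg_def .
  qed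
qed


theorem lemma4p2:
  fixes deg :: "'i::finite \<Rightarrow> int" and d :: int
    and B :: "'i \<Rightarrow> 'i \<Rightarrow> 'k::field"
    and D :: "nat \<Rightarrow> 'i \<Rightarrow> 'i list \<Rightarrow> 'k"
  assumes "ainf_coalg deg D"
    and "symmetric_form deg B"
    and "form_degree deg d B"
    and "nondegenerate B"
  shows "cyclic_coalg deg B D \<longleftrightarrow> cyclic_alg deg B D"
  using coalg_CB[OF assms(3)] alg_CB[OF assms(3,2,4,1)] by simp

end
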